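(* Let $\lambda_{\min}$ be the smallest nonzero eigenvalue of $L$. Then $N-m_V=M-m_H$, and $$\lambda_{\min}\le\frac{N}{N-m_V}=\frac{N}{M-m_H}\le\lambda_N.$$ Moreover, either of the two inequalities is an equality if and only if $\lambda_{\min}=\lambda_N$.
   Context: Let $\Gamma=(V,H,\mathcal C)$ be a hypergraph with real coefficients: $V=\{v_1,\dots,v_N\}$ is a finite set of vertices, $H=(h_1,\dots,h_M)$ is a finite family of subsets $h_j\subseteq V$ called hyperedges (repetitions allowed; hyperedges are distinguished by their index), and $\mathcal C=\{C_{v,h}\in\mathbb R\}$ is a family of real coefficients with $C_{v,h}=0$ if and only if $v\notin h$. Standing assumptions: every vertex lies in at least one hyperedge, and $\Gamma$ is connected. The degree of $v$ is $\deg v=\sum_{h\in H}C_{v,h}^2>0$. The vertex normalized Laplacian is $Lf(v)=\frac{1}{\deg v}\sum_{h\in H}C_{v,h}\sum_{w\in V}C_{w,h}f(w)$ for $f:V\to\mathbb R$; its eigenvalues (real and non-negative) are $\lambda_1\le\dots\le\lambda_N$. The hyperedge normalized Laplacian is $L^H\gamma(h)=\sum_{v\in V}\frac{C_{v,h}}{\deg v}\sum_{h'\in H}C_{v,h'}\gamma(h')$ for $\gamma:H\to\mathbb R$. Here $m_V$ and $m_H$ are the multiplicities of the eigenvalue $0$ of $L$ and of $L^H$ respectively. *)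

theory Defs
  imports "Jordan_Normal_Form.Char_Poly"
begin

text \<open>Vertices are 0..<N, hyperedges are 0..<M; C i j is the coefficient C_{v_i,h_j}.
  The hyperedge h_j is the support {i. C i j \<noteq> 0}.\<close>

definition hdeg :: "nat \<Rightarrow> (nat \<Rightarrow> nat \<Rightarrow> real) \<Rightarrow> nat \<Rightarrow> real" where
  "hdeg M C i = (\<Sum>j<M. (C i j)^2)"

definition vertex_laplacian :: "nat \<Rightarrow> nat \<Rightarrow> (nat \<Rightarrow> nat \<Rightarrow> real) \<Rightarrow> real mat" where
  "vertex_laplacian N M C = mat N N (\<lambda>(i, k). (\<Sum>j<M. C i j * C k j) / hdeg M C i)"

definition hyperedge_laplacian :: "nat \<Rightarrow> nat \<Rightarrow> (nat \<Rightarrow> nat \<Rightarrow> real) \<Rightarrow> real mat" where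
  "hyperedge_laplacian N M C = mat M M (\<lambda>(j, j'). (\<Sum>i<N. C i j * C i j' / hdeg M C i))"

definition no_isolated :: "nat \<Rightarrow> nat \<Rightarrow> (nat \<Rightarrow> nat \<Rightarrow> real) \<Rightarrow> bool" where
  "no_isolated N M C = (\<forall>i<N. \<exists>j<M. C i j \<noteq> 0)"

definition hconnected :: "nat \<Rightarrow> nat \<Rightarrow> (nat \<Rightarrow> nat \<Rightarrow> real) \<Rightarrow> bool" where
  "hconnected N M C = (\<forall>i<N. \<forall>k<N.
     (\<lambda>a b. a < N \<and> b < N \<and> (\<exists>j<M. C a j \<noteq> 0 \<and> C b j \<noteq> 0))\<^sup>*\<^sup>* i k)"

definition zero_mult :: "real mat \<Rightarrow> nat" where
  "zero_mult A = order 0 (char_poly A)"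

end

theory Submission
  imports Defs "Jordan_Normal_Form.Schur_Decomposition"
begin


lemma hdeg_pos: assumes "no_isolated N M C" "i < N" shows "hdeg M C i > 0"
proof -
  from assms obtain j where j: "j < M" "C i j \<noteq> 0" unfolding no_isolated_def by auto
  show ?thesis unfolding hdeg_def
    by (rule sum_pos2[of _ j], use j in auto)
qed

lemma ev_real:
  assumes ni: "no_isolated N M C"
    and ev: "eigenvalue (map_mat complex_of_real (vertex_laplacian N M C)) a"
  shows "\<exists>r\<ge>0. a = complex_of_real r"
proof -
  let ?Lc = "map_mat complex_of_real (vertex_laplacian N M C)"
  define d where "d i = hdeg M C i" for i
  define S where "S i k = (\<Sum>j<M. C i j * C k j)" for i k
  have dpos: "\<And>i. i < N \<Longrightarrow> d i > 0" unfolding d_def using hdeg_pos[OF ni] by auto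
  have dimL: "dim_row ?Lc = N" "dim_col ?Lc = N" by (auto simp: vertex_laplacian_def)
  from ev obtain v where v: "v \<in> carrier_vec N" "v \<noteq> 0\<^sub>v N" "?Lc *\<^sub>v v = a \<cdot>\<^sub>v v"
    unfolding eigenvalue_def eigenvector_def dimL by auto
  have comp: "(\<Sum>k<N. of_real (S i k) * v$k) = a * of_real (d i) * v$i" if i: "i < N" for i
  proof -
    have "(?Lc *\<^sub>v v) $ i = (a \<cdot>\<^sub>v v) $ i" using v(3) by simp
    hence "(\<Sum>k<N. of_real (S i k / d i) * v$k) = a * v$i"
      using i v(1) by (auto simp: vertex_laplacian_def scalar_prod_def S_def d_def atLeast0LessThan)
    note h1 = this
    have "(\<Sum>k<N. of_real (S i k) * v$k) = of_real (d i) * (\<Sum>k<N. of_real (S i k / d i) * v$k)"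
      using dpos[OF i] by (auto simp: sum_distrib_left field_simps intro!: sum.cong)
    also have "\<dots> = of_real (d i) * (a * v$i)" unfolding h1 ..
    finally show ?thesis by (simp add: ac_simps)
  qed
  have hz: "\<And>z::complex. (of_real (cmod z))^2 = z * cnj z"
    by (metis complex_norm_square of_real_power)
  define w where "w j = (\<Sum>k<N. of_real (C k j) * v$k)" for j
  have key: "(\<Sum>i<N. cnj (v$i) * (\<Sum>k<N. of_real (S i k) * v$k)) = (\<Sum>j<M. w j * cnj (w j))"
  proof -
    have "(\<Sum>i<N. cnj (v$i) * (\<Sum>k<N. of_real (S i k) * v$k))
       = (\<Sum>i<N. \<Sum>k<N. \<Sum>j<M. cnj (v$i) * of_real (C i j) * of_real (C k j) * v$k)"
      by (simp add: S_def sum_distrib_left sum_distrib_right of_real_sum mult.assoc)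
    also have "\<dots> = (\<Sum>i<N. \<Sum>j<M. \<Sum>k<N. cnj (v$i) * of_real (C i j) * of_real (C k j) * v$k)"
      by (rule sum.cong[OF refl], rule sum.swap)
    also have "\<dots> = (\<Sum>j<M. \<Sum>i<N. \<Sum>k<N. cnj (v$i) * of_real (C i j) * of_real (C k j) * v$k)"
      by (rule sum.swap)
    also have "\<dots> = (\<Sum>j<M. w j * cnj (w j))"
      by (simp add: w_def cnj_sum sum_distrib_left sum_distrib_right ac_simps)
    finally show ?thesis .
  qed
  have lhs: "(\<Sum>i<N. cnj (v$i) * (\<Sum>k<N. of_real (S i k) * v$k)) = a * of_real (\<Sum>i<N. d i * (cmod (v$i))^2)"
  proof -
    have "(\<Sum>i<N. cnj (v$i) * (\<Sum>k<N. of_real (S i k) * v$k)) = (\<Sum>i<N. a * of_real (d i) * (v$i * cnj (v$i)))"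
    proof (rule sum.cong[OF refl])
      fix i assume "i \<in> {..<N}"
      hence "cnj (v$i) * (\<Sum>k<N. of_real (S i k) * v$k) = cnj (v$i) * (a * of_real (d i) * v$i)"
        by (simp only: comp lessThan_iff)
      thus "cnj (v$i) * (\<Sum>k<N. of_real (S i k) * v$k) = a * of_real (d i) * (v$i * cnj (v$i))"
        by (simp add: algebra_simps)
    qed
    also have "\<dots> = a * of_real (\<Sum>i<N. d i * (cmod (v$i))^2)"
      by (simp add: hz sum_distrib_left of_real_sum ac_simps)
    finally show ?thesis .
  qed
  have rhs: "(\<Sum>j<M. w j * cnj (w j)) = of_real (\<Sum>j<M. (cmod (w j))^2)"
    by (simp add: hz of_real_sum)
  obtain i where i: "i < N" "v$i \<noteq> 0" using v(1,2) by (metis eq_vecI carrier_vecD index_zero_vec)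
  have T: "(\<Sum>i<N. d i * (cmod (v$i))^2) > 0"
    proof (rule sum_pos2)
    show "0 < d i * (cmod (v$i))^2" using i dpos by auto
    show "\<And>k. k \<in> {..<N} \<Longrightarrow> 0 \<le> d k * (cmod (v$k))^2" using dpos by (metis less_imp_le mult_nonneg_nonneg zero_le_power2 lessThan_iff)
  qed (use i in auto)
  have "a * of_real (\<Sum>i<N. d i * (cmod (v$i))^2) = of_real (\<Sum>j<M. (cmod (w j))^2)"
    using key lhs rhs by simp
  moreover have gen: "\<And>(A::real) T. T > 0 \<Longrightarrow> a * of_real T = of_real A \<Longrightarrow> a = of_real (A / T)"
    by (simp add: eq_divide_eq)
  ultimately have "a = of_real ((\<Sum>j<M. (cmod (w j))^2) / (\<Sum>i<N. d i * (cmod (v$i))^2))"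
    using T by blast
  moreover have "(\<Sum>j<M. (cmod (w j))^2) / (\<Sum>i<N. d i * (cmod (v$i))^2) \<ge> 0"
    using T by (intro divide_nonneg_pos sum_nonneg) auto
  ultimately show ?thesis by blast
qed


lemma list_avg:
  fixes rs :: "real list" and N z :: nat
  assumes sum: "sum_list rs = real N" and Npos: "N > 0"
    and z: "z = length (filter (\<lambda>r. r = 0) rs)" and len: "length rs = N"
  defines "lmin \<equiv> Min {k. k \<in> set rs \<and> k \<noteq> 0}" and "lmax \<equiv> Max (set rs)"
  shows "real N - real z > 0 \<and> lmin \<le> real N / (real N - real z) \<and> real N / (real N - real z) \<le> lmax
    \<and> (lmin = real N / (real N - real z) \<longleftrightarrow> lmin = lmax)
    \<and> (real N / (real N - real z) = lmax \<longleftrightarrow> lmin = lmax)"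
proof -
  define nz where "nz = filter (\<lambda>r. r \<noteq> 0) rs"
  define K where "K = length nz"
  have KN: "K + z = N" unfolding K_def nz_def z len[symmetric]
    using sum_length_filter_compl[of "\<lambda>r. r \<noteq> 0" rs] by simp
  have snz: "sum_list nz = real N" unfolding nz_def sum[symmetric] by (induct rs) auto
  have setnz: "set nz = {k. k \<in> set rs \<and> k \<noteq> 0}" unfolding nz_def by auto
  have "nz \<noteq> []" using snz Npos by auto
  hence Kpos: "K > 0" unfolding K_def by auto
  have diff: "real N - real z = real K" using KN by auto
  define X where "X = set nz"
  have fX: "finite X" and neX: "X \<noteq> {}" unfolding X_def using \<open>nz \<noteq> []\<close> by auto
  have lmin: "lmin = Min X" unfolding lmin_def X_def setnz ..
  define lM where "lM = Max X"
  have sumi: "(\<Sum>i<K. nz!i) = real N" using snz unfolding sum_list_sum_nth K_def atLeast0LessThan .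
  have mem: "\<And>i. i < K \<Longrightarrow> nz!i \<in> X" unfolding X_def K_def by auto
  have lo: "\<And>i. i < K \<Longrightarrow> lmin \<le> nz!i" using mem fX lmin by auto
  have hi: "\<And>i. i < K \<Longrightarrow> nz!i \<le> lM" using mem fX lM_def by auto
  have s1: "real K * lmin \<le> real N"
  proof -
    have "(\<Sum>i<K. lmin) \<le> (\<Sum>i<K. nz!i)" by (rule sum_mono) (use lo in auto)
    thus ?thesis using sumi by simp
  qed
  have s2: "real N \<le> real K * lM"
  proof -
    have "(\<Sum>i<K. nz!i) \<le> (\<Sum>i<K. lM)" by (rule sum_mono) (use hi in auto)
    thus ?thesis using sumi by simp
  qed
  have lMpos: "lM > 0"
  proof -
    have "real N > 0" using Npos by simp
    with s2 Kpos show ?thesis by (smt (verit) mult_nonneg_nonpos of_nat_0_le_iff)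
  qed
  have lmax: "lmax = lM"
  proof -
    have "lM \<in> X" unfolding lM_def using fX neX by auto
    hence "lM \<in> set rs" unfolding X_def setnz by auto
    hence ge: "lM \<le> lmax" unfolding lmax_def by auto
    have "set rs \<noteq> {}" using \<open>lM \<in> set rs\<close> by auto
    hence "lmax \<in> set rs" unfolding lmax_def by auto
    moreover have "lmax \<noteq> 0" using ge lMpos by auto
    ultimately have "lmax \<in> X" unfolding X_def setnz by auto
    hence "lmax \<le> lM" unfolding lM_def using fX by auto
    with ge show ?thesis by auto
  qed
  have avg1: "lmin \<le> real N / real K" using s1 Kpos by (simp add: field_simps)
  have avg2: "real N / real K \<le> lM" using s2 Kpos by (simp add: field_simps)
  have eq: "lmin = lM \<Longrightarrow> lmin = real N / real K"
    using avg1 avg2 by auto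
  have lt1: "lmin < lM \<Longrightarrow> lmin < real N / real K"
  proof -
    assume "lmin < lM"
    have "lM \<in> set nz" unfolding lM_def using fX neX X_def by auto
    then obtain i where i: "i < K" "nz!i = lM" unfolding K_def by (metis in_set_conv_nth)
    have "(\<Sum>i<K. lmin) < (\<Sum>i<K. nz!i)"
      by (rule sum_strict_mono_ex1) (use lo i \<open>lmin < lM\<close> in auto)
    hence "real K * lmin < real N" using sumi by simp
    thus ?thesis using Kpos by (simp add: field_simps)
  qed
  have lt2: "lmin < lM \<Longrightarrow> real N / real K < lM"
  proof -
    assume "lmin < lM"
    have "lmin \<in> set nz" unfolding lmin using fX neX X_def by auto
    then obtain i where i: "i < K" "nz!i = lmin" unfolding K_def by (metis in_set_conv_nth)
    have "(\<Sum>i<K. nz!i) < (\<Sum>i<K. lM)"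
      by (rule sum_strict_mono_ex1) (use hi i \<open>lmin < lM\<close> in auto)
    hence "real N < real K * lM" using sumi by simp
    thus ?thesis using Kpos by (simp add: field_simps)
  qed
  have "lmin \<le> lM" using avg1 avg2 by auto
  show ?thesis unfolding diff lmax using avg1 avg2 eq lt1 lt2 Kpos \<open>lmin \<le> lM\<close>
    by (smt (verit) of_nat_0_less_iff)
qed


lemma sylvester_det:
  fixes P :: "'a::idom mat"
  assumes P: "P \<in> carrier_mat n m" and Q: "Q \<in> carrier_mat m n"
  shows "x^m * det (x \<cdot>\<^sub>m 1\<^sub>m n + P*Q) = x^n * det (x \<cdot>\<^sub>m 1\<^sub>m m + Q*P)"
proof -
  define G where "G = four_block_mat (x \<cdot>\<^sub>m 1\<^sub>m n) (-P) Q (1\<^sub>m m)"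
  define H where "H = four_block_mat (x \<cdot>\<^sub>m 1\<^sub>m n) (-P) (x \<cdot>\<^sub>m Q) (x \<cdot>\<^sub>m 1\<^sub>m m)"
  have PQ: "P * Q \<in> carrier_mat n n" and QP: "Q * P \<in> carrier_mat m m" using P Q by auto
  have mP: "-P \<in> carrier_mat n m" using P by auto
  have e1: "(-P) * Q = - (P * Q)" using P Q by auto
  have G1: "G = four_block_mat (1\<^sub>m n) (-P) (0\<^sub>m m n) (1\<^sub>m m) * four_block_mat (x \<cdot>\<^sub>m 1\<^sub>m n + P*Q) (0\<^sub>m n m) Q (1\<^sub>m m)"
    unfolding G_def
    apply (subst mult_four_block_mat[OF one_carrier_mat mP zero_carrier_mat one_carrier_mat _ zero_carrier_mat Q one_carrier_mat])
    using P Q PQ apply (auto simp: e1)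
    done
  have dG: "det G = det (x \<cdot>\<^sub>m 1\<^sub>m n + P*Q)"
    unfolding G1
    apply (subst det_mult[of _ "n+m"])
    using P Q PQ apply auto
    apply (subst det_four_block_mat_lower_left_zero[OF one_carrier_mat mP refl one_carrier_mat])
    apply (subst det_four_block_mat_upper_right_zero[of _ n _ m])
    apply auto
    done
  have H1: "H = four_block_mat (1\<^sub>m n) (0\<^sub>m n m) (0\<^sub>m m n) (x \<cdot>\<^sub>m 1\<^sub>m m) * G"
    unfolding G_def H_def
    apply (subst mult_four_block_mat[OF one_carrier_mat zero_carrier_mat zero_carrier_mat smult_carrier_mat[OF one_carrier_mat] smult_carrier_mat[OF one_carrier_mat] mP Q one_carrier_mat])
    using P Q PQ apply (auto)
    done
  have Gc: "G \<in> carrier_mat (n+m) (n+m)" unfolding G_def using P Q by auto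
  have dD: "det (four_block_mat (1\<^sub>m n) (0\<^sub>m n m) (0\<^sub>m m n) (x \<cdot>\<^sub>m 1\<^sub>m m)) = x^m"
    by (subst det_four_block_mat_upper_right_zero[of _ n _ m], auto)
  have dH1: "det H = x^m * det G"
    unfolding H1
    by (subst det_mult[OF _ Gc], auto simp: dD)
  have H2: "H = four_block_mat (1\<^sub>m n) (0\<^sub>m n m) Q (1\<^sub>m m) * four_block_mat (x \<cdot>\<^sub>m 1\<^sub>m n) (-P) (0\<^sub>m m n) (x \<cdot>\<^sub>m 1\<^sub>m m + Q*P)"
    unfolding H_def
    apply (subst mult_four_block_mat[OF one_carrier_mat zero_carrier_mat Q one_carrier_mat smult_carrier_mat[OF one_carrier_mat] mP zero_carrier_mat add_carrier_mat[OF QP]])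
    using P Q PQ QP apply (auto)
    done
  have dH2: "det H = x^n * det (x \<cdot>\<^sub>m 1\<^sub>m m + Q*P)"
    unfolding H2
    apply (subst det_mult[of _ "n+m"])
    using P Q QP apply (auto)
    apply (subst det_four_block_mat_upper_right_zero[of _ n _ m])
    apply auto
    apply (subst det_four_block_mat_lower_left_zero[of _ n _ m])
    apply auto
    done
  show ?thesis using dG dH1 dH2 by simp
qed

definition mtr :: "'a::comm_ring_1 mat \<Rightarrow> 'a" where "mtr A = (\<Sum>i<dim_row A. A$$(i,i))"

lemma mtr_comm: assumes A: "A \<in> carrier_mat n k" and B: "B \<in> carrier_mat k n"
  shows "mtr (A*B) = mtr (B*A)"
proof -
  have "mtr (A*B) = (\<Sum>i<n. \<Sum>j<k. A$$(i,j) * B$$(j,i))"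
    using A B by (simp add: mtr_def scalar_prod_def atLeast0LessThan)
  also have "\<dots> = (\<Sum>j<k. \<Sum>i<n. B$$(j,i) * A$$(i,j))"
    by (subst sum.swap) (simp add: mult.commute)
  also have "\<dots> = mtr (B*A)"
    using A B by (simp add: mtr_def scalar_prod_def atLeast0LessThan)
  finally show ?thesis .
qed

lemma mtr_similar: assumes "similar_mat_wit A B P Q" "A \<in> carrier_mat n n"
  shows "mtr A = mtr B"
proof -
  from assms have c: "B \<in> carrier_mat n n" "P \<in> carrier_mat n n" "Q \<in> carrier_mat n n"
    and QP: "Q * P = 1\<^sub>m n" and AB: "A = P * B * Q"
    unfolding similar_mat_wit_def Let_def by auto
  have "mtr A = mtr ((P * B) * Q)" using AB by simp
  also have "\<dots> = mtr (Q * (P * B))" by (rule mtr_comm[of _ n n]) (use c in auto)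
  also have "Q * (P * B) = (Q * P) * B" using c by (simp add: assoc_mult_mat)
  also have "\<dots> = B" using QP c by simp
  finally show ?thesis .
qed

lemma mtr_upper: assumes "B \<in> carrier_mat n n" shows "mtr B = sum_list (diag_mat B)"
  using assms by (simp add: mtr_def diag_mat_def sum_list_distinct_conv_sum_set atLeast0LessThan)

lemma order_prod_linear: "Polynomial.order 0 (\<Prod>r\<leftarrow>rs. [:- r, 1:]) = length (filter (\<lambda>r. r = (0::'a::idom)) rs)"
proof (induct rs)
  case Nil then show ?case by (simp add: order_0I)
next
  case (Cons r rs)
  have nz: "(\<Prod>r\<leftarrow>rs. [:- r, 1:]) \<noteq> 0" by (auto simp: prod_list_zero_iff)
  have "Polynomial.order 0 (\<Prod>r\<leftarrow>r#rs. [:- r, 1:]) = Polynomial.order 0 [:-r,1:] + Polynomial.order 0 (\<Prod>r\<leftarrow>rs. [:- r, 1:])"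
  proof -
    have e: "(\<Prod>r\<leftarrow>r#rs. [:- r, 1:]) = [:-r,1:] * (\<Prod>r\<leftarrow>rs. [:- r, 1:])" by simp
    have "[:-r,1:] * (\<Prod>r\<leftarrow>rs. [:- r, 1:]) \<noteq> 0" using nz by (simp only: mult_eq_0_iff pCons_eq_0_iff) simp
    from order_mult[OF this, of 0] show ?thesis unfolding e .
  qed
  then show ?case using Cons by (simp add: order_linear')
qed

lemma char_poly_AB_BA:
  fixes A :: "'a::idom mat"
  assumes A: "A \<in> carrier_mat n m" and B: "B \<in> carrier_mat m n"
  shows "[:0,1:]^m * char_poly (A*B) = [:0,1:]^n * char_poly (B*A)"
proof -
  define P where "P = map_mat (\<lambda>a. [:a:] * [:-1:]) A"
  define Q where "Q = map_mat (\<lambda>a. [:a:]) B"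
  have id: "(\<lambda>a::'a. [:a:] * [:-1:]) = (\<lambda>a. [:-a:])" by (intro ext) auto
  have e1: "map_mat (\<lambda>a. [:-a:]) (A*B) = P * Q"
    unfolding P_def Q_def using map_poly_mult(2)[OF A B, of "[:-1:]"] id by simp
  have e2: "map_mat (\<lambda>a. [:-a:]) (B*A) = Q * P"
    unfolding P_def Q_def using map_poly_mult(3)[OF B A, of "[:-1:]"] id by simp
  have Pc: "P \<in> carrier_mat n m" and Qc: "Q \<in> carrier_mat m n" using A B unfolding P_def Q_def by auto
  have "char_poly (A*B) = det ([:0,1:] \<cdot>\<^sub>m 1\<^sub>m n + P * Q)"
    unfolding char_poly_defs e1 using A B by simp
  moreover have "char_poly (B*A) = det ([:0,1:] \<cdot>\<^sub>m 1\<^sub>m m + Q * P)"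
    unfolding char_poly_defs e2 using A B by simp
  ultimately show ?thesis using sylvester_det[OF Pc Qc, of "[:0,1:]"] by simp
qed


lemma LAB:
  fixes N M :: nat and C :: "nat \<Rightarrow> nat \<Rightarrow> real"
  defines "A \<equiv> mat N M (\<lambda>(i,j). C i j / hdeg M C i)" and "B \<equiv> mat M N (\<lambda>(j,k). C k j)"
  shows "vertex_laplacian N M C = A * B" "hyperedge_laplacian N M C = B * A"
    "A \<in> carrier_mat N M" "B \<in> carrier_mat M N"
proof -
  show "vertex_laplacian N M C = A * B"
    by (rule eq_matI) (auto simp: A_def B_def vertex_laplacian_def scalar_prod_def sum_divide_distrib atLeast0LessThan)
  show "hyperedge_laplacian N M C = B * A"
    by (rule eq_matI) (auto simp: A_def B_def hyperedge_laplacian_def scalar_prod_def atLeast0LessThan)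
  show "A \<in> carrier_mat N M" "B \<in> carrier_mat M N" unfolding A_def B_def by auto
qed

lemma mult_relation:
  shows "M + zero_mult (vertex_laplacian N M C) = N + zero_mult (hyperedge_laplacian N M C)"
proof -
  note l = LAB[of N M C]
  define A where "A = mat N M (\<lambda>(i,j). C i j / hdeg M C i)"
  define B where "B = mat M N (\<lambda>(j,k). C k j)"
  have AB: "vertex_laplacian N M C = A * B" "hyperedge_laplacian N M C = B * A"
    "A \<in> carrier_mat N M" "B \<in> carrier_mat M N" using l unfolding A_def B_def by auto
  have e: "[:0,1:]^M * char_poly (A*B) = [:0,1:]^N * char_poly (B*A)"
    by (rule char_poly_AB_BA[OF AB(3,4)])
  have c1: "char_poly (A*B) \<noteq> 0" using degree_monic_char_poly[of "A*B" N] AB by auto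
  have c2: "char_poly (B*A) \<noteq> 0" using degree_monic_char_poly[of "B*A" M] AB by auto
  have "Polynomial.order 0 ([:0,1:]^M * char_poly (A*B)) = M + Polynomial.order 0 (char_poly (A*B))"
    using c1 by (subst order_mult) (auto simp: order_linear_power)
  moreover have "Polynomial.order 0 ([:0,1:]^N * char_poly (B*A)) = N + Polynomial.order 0 (char_poly (B*A))"
    using c2 by (subst order_mult) (auto simp: order_linear_power)
  ultimately show ?thesis using e unfolding zero_mult_def AB(1,2) by simp
qed

lemma real_factor:
  assumes ni: "no_isolated N M C"
  shows "\<exists>rs. char_poly (vertex_laplacian N M C) = (\<Prod>r\<leftarrow>rs. [:- r, 1:]) \<and> length rs = N"
proof -
  let ?L = "vertex_laplacian N M C"
  let ?Lc = "map_mat complex_of_real ?L"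
  have Lc: "?L \<in> carrier_mat N N" by (simp add: vertex_laplacian_def)
  hence Lcc: "?Lc \<in> carrier_mat N N" by simp
  interpret rp: map_poly_inj_idom_hom "complex_of_real" ..
  obtain as where as: "char_poly ?Lc = (\<Prod>a\<leftarrow>as. [:- a, 1:])" "length as = N"
    using char_poly_factorized[OF Lcc] by blast
  have real: "Re a \<ge> 0 \<and> complex_of_real (Re a) = a" if a: "a \<in> set as" for a
  proof -
    have "poly (char_poly ?Lc) a = 0" unfolding as(1) poly_prod_list_zero_iff using a by auto
    hence "eigenvalue ?Lc a" using eigenvalue_root_char_poly[OF Lcc] by simp
    from ev_real[OF ni this] show ?thesis by auto
  qed
  define rs where "rs = map Re as"
  have asrs: "map complex_of_real rs = as" unfolding rs_def map_map
    by (rule map_idI) (use real in auto)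
  have "map_poly complex_of_real (char_poly ?L) = char_poly ?Lc"
    using of_real_hom.char_poly_hom[OF Lc] by (rule sym)
  also have "\<dots> = (\<Prod>a\<leftarrow>map complex_of_real rs. [:- a, 1:])" unfolding as(1) asrs ..
  also have "\<dots> = map_poly complex_of_real (\<Prod>r\<leftarrow>rs. [:- r, 1:])"
  proof (induct rs)
    case Nil then show ?case by simp
  next
    case (Cons r rs)
    have "(\<Prod>a\<leftarrow>map complex_of_real (r#rs). [:- a, 1:]) = [:- complex_of_real r, 1:] * (\<Prod>a\<leftarrow>map complex_of_real rs. [:- a, 1:])"
      unfolding list.map prod_list.Cons ..
    also have "\<dots> = [:- complex_of_real r, 1:] * map_poly complex_of_real (\<Prod>r\<leftarrow>rs. [:- r, 1:])"
      unfolding Cons ..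
    also have "\<dots> = map_poly complex_of_real [:- r, 1:] * map_poly complex_of_real (\<Prod>r\<leftarrow>rs. [:- r, 1:])"
      by simp
    also have "\<dots> = map_poly complex_of_real ([:- r, 1:] * (\<Prod>r\<leftarrow>rs. [:- r, 1:]))"
      by (rule rp.hom_mult[symmetric])
    also have "\<dots> = map_poly complex_of_real (\<Prod>r\<leftarrow>r#rs. [:- r, 1:])"
      unfolding list.map prod_list.Cons ..
    finally show ?case .
  qed
  finally have "char_poly ?L = (\<Prod>r\<leftarrow>rs. [:- r, 1:])" by (simp add: rp.eq_iff)
  moreover have "length rs = N" unfolding rs_def using as(2) by simp
  ultimately show ?thesis by blast
qed

lemma trace_sum:
  assumes ni: "no_isolated N M C"
    and cp: "char_poly (vertex_laplacian N M C) = (\<Prod>r\<leftarrow>rs. [:- r, 1:])"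
  shows "sum_list rs = real N"
proof -
  let ?L = "vertex_laplacian N M C"
  have Lc: "?L \<in> carrier_mat N N" by (simp add: vertex_laplacian_def)
  obtain Bt P Q where sd: "schur_decomposition ?L rs = (Bt,P,Q)" by (cases "schur_decomposition ?L rs") auto
  from schur_decomposition[OF Lc cp sd] have sw: "similar_mat_wit ?L Bt P Q" and dg: "diag_mat Bt = rs" by auto
  have Bc: "Bt \<in> carrier_mat N N" using sw Lc unfolding similar_mat_wit_def Let_def by auto
  have "mtr ?L = (\<Sum>i<N. 1)"
  proof -
    have "mtr ?L = (\<Sum>i<N. (\<Sum>j<M. C i j * C i j) / hdeg M C i)"
      by (simp add: mtr_def vertex_laplacian_def)
    also have "\<dots> = (\<Sum>i<N. 1)"
    proof (rule sum.cong[OF refl])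
      fix i assume "i \<in> {..<N}"
      hence "hdeg M C i > 0" using hdeg_pos[OF ni] by auto
      thus "(\<Sum>j<M. C i j * C i j) / hdeg M C i = 1" by (simp add: hdeg_def power2_eq_square)
    qed
    finally show ?thesis .
  qed
  hence "mtr ?L = real N" by simp
  moreover have "mtr ?L = sum_list rs" using mtr_similar[OF sw Lc] mtr_upper[OF Bc] dg by simp
  ultimately show ?thesis by simp
qed

theorem mainTheorem10:
  fixes N M :: nat and C :: "nat \<Rightarrow> nat \<Rightarrow> real"
  assumes "0 < N"
    and "no_isolated N M C"
    and "hconnected N M C"
  defines "L \<equiv> vertex_laplacian N M C"
    and "mV \<equiv> zero_mult (vertex_laplacian N M C)"
    and "mH \<equiv> zero_mult (hyperedge_laplacian N M C)"
  defines "lmin \<equiv> Min {k. eigenvalue L k \<and> k \<noteq> 0}"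
    and "lmax \<equiv> Max {k. eigenvalue L k}"
  shows "real N - real mV = real M - real mH
    \<and> lmin \<le> real N / (real N - real mV)
    \<and> real N / (real N - real mV) = real N / (real M - real mH)
    \<and> real N / (real M - real mH) \<le> lmax
    \<and> (lmin = real N / (real N - real mV) \<longleftrightarrow> lmin = lmax)
    \<and> (real N / (real M - real mH) = lmax \<longleftrightarrow> lmin = lmax)"
proof -
  have Lc: "L \<in> carrier_mat N N" by (simp add: L_def vertex_laplacian_def)
  obtain rs where cp: "char_poly L = (\<Prod>r\<leftarrow>rs. [:- r, 1:])" and len: "length rs = N"
    using real_factor[OF assms(2)] unfolding L_def by blast
  have tr: "sum_list rs = real N" using trace_sum[OF assms(2)] cp unfolding L_def by simp
  have mV: "mV = length (filter (\<lambda>r. r = 0) rs)"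
    unfolding mV_def zero_mult_def L_def[symmetric] cp order_prod_linear ..
  have rel: "M + mV = N + mH" unfolding mV_def mH_def by (rule mult_relation)
  hence rel': "real N - real mV = real M - real mH" by linarith
  have ev: "eigenvalue L k \<longleftrightarrow> k \<in> set rs" for k
    unfolding eigenvalue_root_char_poly[OF Lc] cp poly_prod_list_zero_iff by auto
  have s1: "{k. eigenvalue L k \<and> k \<noteq> 0} = {k. k \<in> set rs \<and> k \<noteq> 0}" using ev by auto
  have s2: "{k. eigenvalue L k} = set rs" using ev by auto
  have "real N - real mV > 0 \<and> lmin \<le> real N / (real N - real mV) \<and> real N / (real N - real mV) \<le> lmax
    \<and> (lmin = real N / (real N - real mV) \<longleftrightarrow> lmin = lmax)
    \<and> (real N / (real N - real mV) = lmax \<longleftrightarrow> lmin = lmax)"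
    unfolding lmin_def lmax_def s1 s2 by (rule list_avg[OF tr assms(1) mV len])
  thus ?thesis using rel' by simp
qed

end
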